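(* For every integer $k\ge 0$, as $n\to\infty$, \[ \left\langle\left(S_{2,n}-\frac{n}{4}\right)^k\right\rangle\sim\frac{k!}{2^{\lfloor (k+1)/2\rfloor}\,\lfloor k/2\rfloor!\,4^k}\,n^{\lfloor k/2\rfloor}. \] Equivalently, for every integer $s\ge 0$, \[ \left\langle\left(S_{2,n}-\frac{n}{4}\right)^{2s}\right\rangle\sim\frac{(2s-1)!!}{4^{2s}}n^s,\qquad \left\langle\left(S_{2,n}-\frac{n}{4}\right)^{2s+1}\right\rangle\sim\frac{(2s+1)!!}{2\cdot 4^{2s+1}}n^s. \]
   Context: For $n\ge 1$, let $\Omega_n$ be the set of rooted plane (ordered) full binary trees with $n$ leaves (every internal node has exactly two children, left and right distinguished). The random model is $\Omega_n$ with the uniform probability measure $P_n$; $\langle\cdot\rangle$ denotes expectation with respect to $P_n$. Horton–Strahler ordering: every leaf has order 1; an internal node whose two children have different orders $r_1\neq r_2$ has order $\max\{r_1,r_2\}$; an internal node whose two children both have order $r$ has order $r+1$. A branch of order $r$ is a maximal connected path consisting of nodes all of order $r$. $S_{2,n}(\tau)$ is the number of branches of order $2$ in $\tau\in\Omega_n$. For sequences, $a_n\sim b_n$ means $\lim_{n\to\infty}a_n/b_n=1$. Convention: $(-1)!!=1$. *)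

theory Defs
  imports Complex_Main "HOL-Library.Landau_Symbols"
begin

datatype btree = Leaf | Node btree btree

fun leaves :: "btree \<Rightarrow> nat" where
  "leaves Leaf = 1"
| "leaves (Node l r) = leaves l + leaves r"

definition Omega :: "nat \<Rightarrow> btree set" where
  "Omega n = {t. leaves t = n}"

fun hs_order :: "btree \<Rightarrow> nat" where
  "hs_order Leaf = 1"
| "hs_order (Node l r) =
     (if hs_order l = hs_order r then hs_order l + 1
      else max (hs_order l) (hs_order r))"

text \<open>branches_aux q p t counts the branches of order q inside subtree t,
where p is the order of the parent of the root of t (0 if t is the whole tree,
i.e. its root has no parent). Nodes of order q form vertex-disjoint paths;
each maximal one (a branch) is counted once, at its top node, i.e. the node
of order q whose parent does not have order q (or which is the root).\<close>
fun branches_aux :: "nat \<Rightarrow> nat \<Rightarrow> btree \<Rightarrow> nat" where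
  "branches_aux q p Leaf = (if hs_order Leaf = q \<and> p \<noteq> q then 1 else 0)"
| "branches_aux q p (Node l r) =
     (if hs_order (Node l r) = q \<and> p \<noteq> q then 1 else 0)
     + branches_aux q (hs_order (Node l r)) l
     + branches_aux q (hs_order (Node l r)) r"

definition branches :: "nat \<Rightarrow> btree \<Rightarrow> nat" where
  "branches q t = branches_aux q 0 t"

abbreviation S2 :: "btree \<Rightarrow> nat" where
  "S2 t \<equiv> branches 2 t"

definition expect :: "nat \<Rightarrow> (btree \<Rightarrow> real) \<Rightarrow> real" where
  "expect n f = (\<Sum>t\<in>Omega n. f t) / real (card (Omega n))"

end

theory Submission
  imports Defs "HOL-Computational_Algebra.Formal_Power_Series" "HOL-Real_Asymp.Real_Asymp"
begin

unbundle fps_syntax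


lemma leaves_pos: "leaves t \<ge> 1"
  by (induction t) auto

lemma hs_pos: "hs_order t \<ge> 1"
  by (induction t) auto

lemma hs_child: "hs_order l \<le> hs_order (Node l r)" "hs_order r \<le> hs_order (Node l r)"
  by (cases "hs_order l = hs_order r"; simp)+

lemma hs_node_ge2: "hs_order (Node l r) \<ge> 2"
  using hs_pos[of l] hs_pos[of r] by auto

lemma hs_eq1: "hs_order t = 1 \<longleftrightarrow> t = Leaf"
proof (cases t)
  case (Node l r) then show ?thesis using hs_node_ge2[of l r] by auto
qed simp

lemma ba_indep: "p \<noteq> q \<Longrightarrow> q \<noteq> 0 \<Longrightarrow> branches_aux q p t = branches_aux q 0 t"
  by (cases t) auto

lemma ba22: "hs_order t \<le> 2 \<Longrightarrow> branches_aux 2 2 t = 0"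
proof (induction t)
  case Leaf then show ?case by simp
next
  case (Node l r)
  have "hs_order l \<le> 2" "hs_order r \<le> 2"
    using le_trans[OF hs_child(1)[where l=l and r=r] Node.prems] le_trans[OF hs_child(2)[where l=l and r=r] Node.prems] by auto
  moreover have "hs_order (Node l r) = 2" using Node.prems hs_node_ge2[of l r] by linarith
  ultimately show ?case using Node.IH by (simp del: hs_order.simps)
qed

lemma S2_Node: "S2 (Node l r) = (if l = Leaf \<and> r = Leaf then 1 else S2 l + S2 r)"
proof (cases "hs_order (Node l r) = 2")
  case True
  have "hs_order l \<le> 2" "hs_order r \<le> 2"
    using le_trans[OF hs_child(1)[where l=l and r=r]] le_trans[OF hs_child(2)[where l=l and r=r]] True by auto
  then have a: "S2 (Node l r) = 1" using True ba22 unfolding branches_def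
    by (simp del: hs_order.simps)
  show ?thesis
  proof (cases "l = Leaf \<and> r = Leaf")
    case True then show ?thesis using a by simp
  next
    case False
    then have "(l = Leaf \<and> hs_order r = 2) \<or> (r = Leaf \<and> hs_order l = 2)"
      using True hs_pos[of l] hs_pos[of r] hs_eq1[of l] hs_eq1[of r]
      by (auto split: if_splits)
    moreover have "S2 x = 1" if "hs_order x = 2" for x
    proof (cases x)
      case Leaf then show ?thesis using that by simp
    next
      case (Node a c)
      have "hs_order a \<le> 2" "hs_order c \<le> 2"
        using le_trans[OF hs_child(1)[where l=a and r=c]] le_trans[OF hs_child(2)[where l=a and r=c]] that Node by auto
      then show ?thesis using that Node ba22 unfolding branches_def by (simp del: hs_order.simps)
    qed
    ultimately show ?thesis using a False by (auto simp: branches_def)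
  qed
next
  case False
  then have nl: "\<not> (l = Leaf \<and> r = Leaf)" by auto
  show ?thesis using False nl ba_indep[of "hs_order (Node l r)" 2]
    unfolding branches_def by (simp del: hs_order.simps)
qed

lemma Omega0: "Omega 0 = {}"
proof -
  have "leaves t \<noteq> 0" for t using leaves_pos[of t] by linarith
  then show ?thesis by (auto simp: Omega_def)
qed
lemma Omega1: "Omega (Suc 0) = {Leaf}"
  unfolding Omega_def apply auto
  subgoal premises prems for t proof (cases t)
    case (Node l r) then show ?thesis using prems leaves_pos[of l] leaves_pos[of r] by auto
  qed simp
  done

lemma Omega_Suc_Suc: "Omega (Suc (Suc m)) =
   (\<lambda>(l,r). Node l r) ` (\<Union>i\<in>{1..Suc m}. Omega i \<times> Omega (Suc (Suc m) - i))"
proof -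
  { fix t assume "t \<in> Omega (Suc (Suc m))"
    then obtain l r where "t = Node l r" "leaves l + leaves r = Suc (Suc m)"
      by (cases t) (auto simp: Omega_def)
    then have "t \<in> (\<lambda>(l,r). Node l r) ` (\<Union>i\<in>{1..Suc m}. Omega i \<times> Omega (Suc (Suc m) - i))"
      using leaves_pos[of l] leaves_pos[of r]
      by (auto simp: Omega_def image_iff intro!: bexI[of _ "leaves l"]) }
  then show ?thesis by (auto simp: Omega_def)
qed

lemma finite_Omega: "finite (Omega n)"
proof (induction n rule: less_induct)
  case (less n)
  show ?case
  proof (cases n)
    case 0 then show ?thesis by (simp add: Omega0)
  next
    case (Suc m) note m = this
    show ?thesis
    proof (cases m)
      case 0 then show ?thesis using m by (simp add: Omega1)
    next
      case (Suc p)
      then show ?thesis using m less by (auto simp: Omega_Suc_Suc)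
    qed
  qed
qed

lemma sum_Omega_Suc_Suc:
  "(\<Sum>t\<in>Omega (Suc (Suc m)). f t) =
   (\<Sum>i=1..Suc m. \<Sum>l\<in>Omega i. \<Sum>r\<in>Omega (Suc (Suc m) - i). f (Node l r))"
proof -
  have inj: "inj_on (\<lambda>(l,r). Node l r) X" for X by (auto simp: inj_on_def)
  have "(\<Sum>t\<in>Omega (Suc (Suc m)). f t) =
        (\<Sum>p\<in>(\<Union>i\<in>{1..Suc m}. Omega i \<times> Omega (Suc (Suc m) - i)). (\<lambda>(l,r). f (Node l r)) p)"
    unfolding Omega_Suc_Suc by (subst sum.reindex[OF inj]) (simp add: case_prod_beta)
  also have "\<dots> = (\<Sum>i=1..Suc m. \<Sum>p\<in>Omega i \<times> Omega (Suc (Suc m) - i). (\<lambda>(l,r). f (Node l r)) p)"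
    by (rule sum.UNION_disjoint) (auto simp: finite_Omega[unfolded Omega_def] Omega_def)
  also have "\<dots> = (\<Sum>i=1..Suc m. \<Sum>l\<in>Omega i. \<Sum>r\<in>Omega (Suc (Suc m) - i). f (Node l r))"
    by (simp add: sum.cartesian_product)
  finally show ?thesis .
qed



definition Ptr :: "'a::comm_ring_1 \<Rightarrow> nat \<Rightarrow> 'a" where
  "Ptr y n = (\<Sum>t\<in>Omega n. y ^ S2 t)"

lemma Ptr1: "Ptr y (Suc 0) = 1"
  by (simp add: Ptr_def Omega1 branches_def)

lemma Leaf_Omega: "Leaf \<in> Omega i \<longleftrightarrow> i = 1"
  by (auto simp: Omega_def)

lemma Ptr_rec: "Ptr y (Suc (Suc m)) =
   (\<Sum>i=1..Suc m. Ptr y i * Ptr y (Suc (Suc m) - i)) + (if m = 0 then y - 1 else 0)"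
proof -
  have node: "y ^ S2 (Node l r) = y ^ S2 l * y ^ S2 r + (if l = Leaf \<and> r = Leaf then y - 1 else 0)" for l r
    unfolding S2_Node by (auto simp: power_add branches_def)
  have corr: "(\<Sum>l\<in>Omega i. \<Sum>r\<in>Omega (Suc (Suc m) - i). (if l = Leaf \<and> r = Leaf then y - 1 else 0))
     = (if i = 1 \<and> m = 0 then y - 1 else 0)" for i
  proof -
    have "(\<Sum>l\<in>Omega i. \<Sum>r\<in>Omega (Suc (Suc m) - i). (if l = Leaf \<and> r = Leaf then y - 1 else 0))
      = (\<Sum>l\<in>Omega i. if l = Leaf then (if Leaf \<in> Omega (Suc (Suc m) - i) then y - 1 else 0) else 0)"
    proof (intro sum.cong refl)
      fix l
      show "(\<Sum>r\<in>Omega (Suc (Suc m) - i). (if l = Leaf \<and> r = Leaf then y - 1 else 0)) =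
        (if l = Leaf then (if Leaf \<in> Omega (Suc (Suc m) - i) then y - 1 else 0) else 0)"
      proof (cases "l = Leaf")
        case True then show ?thesis by (simp add: finite_Omega sum.delta)
      qed simp
    qed
    also have "\<dots> = (if Leaf \<in> Omega i then (if Leaf \<in> Omega (Suc (Suc m) - i) then y - 1 else 0) else 0)"
      by (simp add: finite_Omega sum.delta)
    finally show ?thesis by (auto simp: Leaf_Omega)
  qed
  have "Ptr y (Suc (Suc m)) = (\<Sum>i=1..Suc m. \<Sum>l\<in>Omega i. \<Sum>r\<in>Omega (Suc (Suc m) - i).
      y ^ S2 l * y ^ S2 r + (if l = Leaf \<and> r = Leaf then y - 1 else 0))"
    unfolding Ptr_def sum_Omega_Suc_Suc node ..
  also have "\<dots> = (\<Sum>i=1..Suc m. Ptr y i * Ptr y (Suc (Suc m) - i)) +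
     (\<Sum>i=1..Suc m. (if i = 1 \<and> m = 0 then y - 1 else 0))"
    unfolding sum.distrib corr Ptr_def sum_product by (simp add: mult.commute)
  also have "(\<Sum>i=1..Suc m. (if i = 1 \<and> m = 0 then y - 1 else (0::'a))) = (if m = 0 then y - 1 else 0)"
    by (cases "m = 0") auto
  finally show ?thesis .
qed



definition bb :: "nat \<Rightarrow> real" where "bb m = (1/2) gchoose m"

definition Sq :: "real fps \<Rightarrow> real fps fps" where
  "Sq a = Abs_fps (\<lambda>j. fps_const (bb j) * (-a) ^ j)"

lemma fps_const_sum': "fps_const (\<Sum>i\<in>A. f i) = (\<Sum>i\<in>A. fps_const (f i))"
  by (rule fps_ext) (simp add: fps_sum_nth)

lemma one_gchoose: "(1::real) gchoose n = (if n \<le> 1 then 1 else 0)"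
  using binomial_gbinomial[of 1 n, where 'a=real] by (cases n) (auto simp: binomial_eq_0)

lemma Sq_sq: "Sq a * Sq a = 1 - fps_const a * fps_X"
proof (rule fps_ext)
  fix n
  have "(Sq a * Sq a) $ n = (\<Sum>i=0..n. fps_const (bb i * bb (n - i)) * (-a) ^ n)"
    unfolding fps_mult_nth Sq_def
  proof (intro sum.cong refl)
    fix i assume "i \<in> {0..n}"
    then have e: "(-a) ^ i * (-a) ^ (n - i) = (-a) ^ n"
      by (simp add: power_add[symmetric])
    have "fps_const (bb i) * (-a) ^ i * (fps_const (bb (n - i)) * (-a) ^ (n - i)) =
          (fps_const (bb i) * fps_const (bb (n - i))) * ((-a) ^ i * (-a) ^ (n - i))"
      by (simp only: mult_ac)
    then show "Abs_fps (\<lambda>j. fps_const (bb j) * (-a) ^ j) $ i * Abs_fps (\<lambda>j. fps_const (bb j) * (-a) ^ j) $ (n - i) =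
          fps_const (bb i * bb (n - i)) * (-a) ^ n"
      by (simp only: fps_nth_Abs_fps e fps_const_mult)
  qed
  also have "\<dots> = fps_const (\<Sum>i=0..n. bb i * bb (n - i)) * (-a) ^ n"
    by (simp add: sum_distrib_right fps_const_sum')
  also have "(\<Sum>i=0..n. bb i * bb (n - i)) = (1::real) gchoose n"
    unfolding bb_def using gbinomial_Vandermonde[of "1/2::real" "1/2" n] by simp
  finally show "(Sq a * Sq a) $ n = (1 - fps_const a * fps_X) $ n"
    using not_less_eq_eq by (cases "n = 0 \<or> n = 1") (auto simp: one_gchoose fps_X_nth)
qed

lemma Sq0: "Sq a $ 0 = 1" by (simp add: Sq_def bb_def)

lemma two_fps_cancel: "(2::real fps) * a = 2 * b \<Longrightarrow> a = b"
proof -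
  assume "(2::real fps) * a = 2 * b"
  moreover have "(2::real fps) \<noteq> 0"
    by (metis fps_const_neg zero_neq_numeral fps_const_eq_0_iff numeral_fps_const)
  ultimately show ?thesis by simp
qed

lemma main_fps:
  fixes \<alpha> \<beta> y :: "real fps"
  assumes ab: "\<alpha> + \<beta> = 4" "\<alpha> * \<beta> = 4 * (1 - y)"
  assumes n: "n \<ge> 1"
  shows "(1 - Sq \<beta> * Sq \<alpha>) $ n = 2 * Ptr y n"
proof -
  define P where "P = Sq \<beta> * Sq \<alpha>"
  define H where "H = 1 - P"
  have H0: "H $ 0 = 0" by (simp add: H_def P_def Sq0)
  have PP: "P * P = 1 - fps_const 4 * fps_X + fps_const (4 * (1 - y)) * fps_X ^ 2"
  proof -
    have "P * P = (Sq \<beta> * Sq \<beta>) * (Sq \<alpha> * Sq \<alpha>)" by (simp add: P_def mult_ac)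
    also have "\<dots> = (1 - fps_const \<beta> * fps_X) * (1 - fps_const \<alpha> * fps_X)" by (simp only: Sq_sq)
    also have "\<dots> = 1 - fps_const (\<alpha> + \<beta>) * fps_X + fps_const (\<alpha> * \<beta>) * fps_X ^ 2"
    proof -
      have "(1 - fps_const \<beta> * fps_X) * (1 - fps_const \<alpha> * fps_X) =
         1 - (fps_const \<alpha> + fps_const \<beta>) * (fps_X :: real fps fps) + (fps_const \<alpha> * fps_const \<beta>) * fps_X ^ 2"
        unfolding power2_eq_square by algebra
      then show ?thesis by simp
    qed
    finally show ?thesis using ab by simp
  qed
  have HH: "H * H = 2 * H - 1 + P * P" by (simp add: H_def algebra_simps)
  have HHn: "(H * H) $ k = 2 * H $ k + (P * P) $ k" if "k \<ge> 1" for k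
    using that unfolding HH by (simp add: numeral_fps_const)
  have PPn: "(P * P) $ k = (if k = 1 then -4 else if k = 2 then 4 * (1 - y) else 0)" if "k \<ge> 1" for k
    using that unfolding PP by (auto simp: fps_X_nth fps_X_power_mult_right_nth)
  have "\<forall>k. k \<ge> 1 \<longrightarrow> k \<le> n \<longrightarrow> H $ k = 2 * Ptr y k"
  proof (induction n)
    case 0 then show ?case by simp
  next
    case (Suc n)
    show ?case
    proof (intro allI impI)
      fix k assume k: "k \<ge> 1" "k \<le> Suc n"
      show "H $ k = 2 * Ptr y k"
      proof (cases "k \<le> n")
        case True then show ?thesis using Suc k by blast
      next
        case False
        then have kk: "k = Suc n" using k by simp
        show ?thesis
        proof (cases n)
          case 0
          have a: "(H * H) $ 1 = 0" by (simp add: fps_mult_nth_1 H0)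
          have b: "(P * P) $ 1 = -4" using PPn[of 1] by (simp del: fps_mult_nth_1')
          have "(H * H) $ 1 = 2 * H $ 1 + (P * P) $ 1" using HHn[of 1] by (simp del: fps_mult_nth_1')
          then have "2 * H $ 1 = 2 * 2" unfolding a b by (simp add: algebra_simps)
          then have "H $ 1 = 2" by (rule two_fps_cancel)
          then show ?thesis using kk 0 Ptr1 by simp
        next
          case (Suc m)
          have "(H * H) $ Suc (Suc m) = (\<Sum>i=1..Suc m. H $ i * H $ (Suc (Suc m) - i))"
          proof -
            have "(H * H) $ Suc (Suc m) = (\<Sum>i=0..Suc m. H $ i * H $ (Suc (Suc m) - i)) + H $ Suc (Suc m) * H $ 0"
              unfolding fps_mult_nth by (subst sum.atLeast0_atMost_Suc) simp
            also have "(\<Sum>i=0..Suc m. H $ i * H $ (Suc (Suc m) - i)) =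
                H $ 0 * H $ Suc (Suc m) + (\<Sum>i=Suc 0..Suc m. H $ i * H $ (Suc (Suc m) - i))"
              by (subst sum.atLeast_Suc_atMost) simp_all
            finally show ?thesis using H0 by simp
          qed
          also have "\<dots> = (\<Sum>i=1..Suc m. (2 * Ptr y i) * (2 * Ptr y (Suc (Suc m) - i)))"
            using Suc.IH Suc by (intro sum.cong refl) auto
          also have "\<dots> = 4 * (\<Sum>i=1..Suc m. Ptr y i * Ptr y (Suc (Suc m) - i))"
            by (simp add: sum_distrib_left mult_ac)
          finally have "2 * H $ Suc (Suc m) = 4 * (\<Sum>i=1..Suc m. Ptr y i * Ptr y (Suc (Suc m) - i))
              - (if m = 0 then 4 * (1 - y) else 0)"
            using HHn[of "Suc (Suc m)"] PPn[of "Suc (Suc m)"] by (auto simp: algebra_simps)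
          also have "\<dots> = 2 * (2 * Ptr y (Suc (Suc m)))"
            unfolding Ptr_rec by (auto simp: algebra_simps)
          finally have "2 * H $ Suc (Suc m) = 2 * (2 * Ptr y (Suc (Suc m)))" .
          then have "H $ Suc (Suc m) = 2 * Ptr y (Suc (Suc m))" by (rule two_fps_cancel)
          then show ?thesis using kk Suc by simp
        qed
      qed
    qed
  qed
  then show ?thesis using n by (simp add: H_def P_def)
qed



definition hh :: "real fps" where "hh = Abs_fps (\<lambda>m. if even m then 1 / fact (m + 2) else 0)"
definition uu :: "real fps" where "uu = Abs_fps (\<lambda>m. if even m then 1 / fact (m + 1) else 0)"

lemma Cf: "fps_exp 1 + fps_exp (-1) = 2 * (1 + fps_X ^ 2 * hh)"
proof (rule fps_ext)
  fix m
  show "(fps_exp 1 + fps_exp (-1)) $ m = (2 * (1 + fps_X ^ 2 * hh)) $ m"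
  proof (cases m)
    case 0 then show ?thesis by (simp add: numeral_fps_const fps_X_power_mult_nth)
  next
    case (Suc p) note p = this
    show ?thesis
    proof (cases p)
      case 0 then show ?thesis using p by (simp add: numeral_fps_const fps_X_power_mult_nth)
    next
      case (Suc q)
      then show ?thesis using p
        by (simp add: numeral_fps_const fps_X_power_mult_nth hh_def) (simp add: field_simps)
    qed
  qed
qed

lemma Df: "fps_exp 1 - fps_exp (-1) = 2 * (fps_X * uu)"
proof (rule fps_ext)
  fix m
  show "(fps_exp 1 - fps_exp (-1)) $ m = (2 * (fps_X * uu)) $ m"
  proof (cases m)
    case 0 then show ?thesis by (simp add: numeral_fps_const)
  next
    case (Suc p)
    then show ?thesis by (simp add: numeral_fps_const uu_def) (simp add: field_simps)
  qed
qed

lemma E21: "fps_exp (2::real) * fps_exp (-1) = fps_exp 1"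
  by (simp add: fps_exp_add_mult[symmetric])

lemma nb: "(- (2 * (1 - fps_exp (2::real)))) * fps_exp (-1) = 4 * (fps_X * uu)"
proof -
  have "(- (2 * (1 - fps_exp (2::real)))) * fps_exp (-1) = 2 * (fps_exp 2 * fps_exp (-1) - fps_exp (-1))"
    by (simp add: algebra_simps)
  also have "\<dots> = 2 * (fps_exp 1 - fps_exp (-1))" by (simp only: E21)
  also have "\<dots> = 2 * (2 * (fps_X * uu))" by (simp only: Df)
  finally show ?thesis by simp
qed

lemma na: "(- (2 * (1 + fps_exp (2::real)))) * fps_exp (-1) = - 4 * (1 + fps_X ^ 2 * hh)"
proof -
  have "(- (2 * (1 + fps_exp (2::real)))) * fps_exp (-1) = - 2 * (fps_exp 2 * fps_exp (-1) + fps_exp (-1))"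
    by (simp add: algebra_simps)
  also have "\<dots> = - 2 * (fps_exp 1 + fps_exp (-1))" by (simp only: E21)
  also have "\<dots> = - 2 * (2 * (1 + fps_X ^ 2 * hh))" by (simp only: Cf)
  finally show ?thesis by simp
qed

lemma En: "j \<le> n \<Longrightarrow> fps_exp (- real n) = fps_exp (-1) ^ j * fps_exp (-1) ^ (n - j)"
proof -
  assume "j \<le> n"
  then have "fps_exp (-1) ^ j * fps_exp (-1) ^ (n - j) = fps_exp (-1::real) ^ n"
    by (simp add: power_add[symmetric])
  also have "\<dots> = fps_exp (- real n)" by (simp add: fps_exp_power_mult)
  finally show ?thesis by simp
qed

lemma term_j:
  assumes "j \<le> n"
  shows "fps_exp (- real n) * (fps_const (bb j) * (- (2 * (1 - fps_exp 2))) ^ j *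
           (fps_const (bb (n - j)) * (- (2 * (1 + fps_exp 2))) ^ (n - j))) =
         fps_const (bb j * bb (n - j) * 4 ^ j * (-4) ^ (n - j)) *
           (fps_X ^ j * (uu ^ j * (1 + fps_X ^ 2 * hh) ^ (n - j)))"
proof -
  define B where "B = - (2 * (1 - fps_exp (2::real)))"
  define A where "A = - (2 * (1 + fps_exp (2::real)))"
  define e where "e = fps_exp (-1::real)"
  have "fps_exp (- real n) * (fps_const (bb j) * B ^ j * (fps_const (bb (n - j)) * A ^ (n - j))) =
        (fps_const (bb j) * fps_const (bb (n - j))) * ((B * e) ^ j * (A * e) ^ (n - j))"
    unfolding En[OF assms] e_def[symmetric] power_mult_distrib by (simp only: mult_ac)
  also have "\<dots> = (fps_const (bb j) * fps_const (bb (n - j))) *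
      ((4 * (fps_X * uu)) ^ j * (- 4 * (1 + fps_X ^ 2 * hh)) ^ (n - j))"
    unfolding B_def A_def e_def nb na ..
  also have "\<dots> = (fps_const (bb j) * fps_const (bb (n - j)) * 4 ^ j * (- 4) ^ (n - j)) *
      (fps_X ^ j * (uu ^ j * (1 + fps_X ^ 2 * hh) ^ (n - j)))"
    unfolding power_mult_distrib by (simp only: mult_ac)
  also have "(fps_const (bb j) * fps_const (bb (n - j)) * 4 ^ j * (- 4) ^ (n - j) :: real fps) =
      fps_const (bb j * bb (n - j) * 4 ^ j * (-4) ^ (n - j))"
    by (simp add: numeral_fps_const)
  finally show ?thesis unfolding B_def A_def .
qed

lemma exp_identity:
  assumes n: "n \<ge> 1"
  shows "2 * (\<Sum>t\<in>Omega n. fps_exp (4 * real (S2 t) - real n)) =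
     - (\<Sum>j=0..n. fps_const (bb j * bb (n - j) * 4 ^ j * (-4) ^ (n - j)) *
          (fps_X ^ j * (uu ^ j * (1 + fps_X ^ 2 * hh) ^ (n - j))))"
proof -
  define \<alpha> where "\<alpha> = 2 * (1 + fps_exp (2::real))"
  define \<beta> where "\<beta> = 2 * (1 - fps_exp (2::real))"
  define y where "y = fps_exp (4::real)"
  have ab1: "\<alpha> + \<beta> = 4" by (simp add: \<alpha>_def \<beta>_def algebra_simps)
  have ee: "fps_exp (2::real) * fps_exp 2 = fps_exp 4" by (simp add: fps_exp_add_mult[symmetric])
  have ab2: "\<alpha> * \<beta> = 4 * (1 - y)"
  proof -
    have "\<alpha> * \<beta> = 4 * (1 - fps_exp (2::real) * fps_exp 2)" by (simp add: \<alpha>_def \<beta>_def algebra_simps)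
    then show ?thesis by (simp only: ee y_def)
  qed
  have m: "(1 - Sq \<beta> * Sq \<alpha>) $ n = 2 * Ptr y n" by (rule main_fps[OF ab1 ab2 n])
  have m1: "(1 - Sq \<beta> * Sq \<alpha>) $ n = - (Sq \<beta> * Sq \<alpha>) $ n" using n by simp
  have m3: "(Sq \<beta> * Sq \<alpha>) $ n = (\<Sum>j=0..n. fps_const (bb j) * (-\<beta>) ^ j * (fps_const (bb (n - j)) * (-\<alpha>) ^ (n - j)))"
    unfolding fps_mult_nth Sq_def by simp
  have m2: "2 * Ptr y n = - (\<Sum>j=0..n. fps_const (bb j) * (-\<beta>) ^ j * (fps_const (bb (n - j)) * (-\<alpha>) ^ (n - j)))"
    using m m1 m3 by simp
  have lhs: "fps_exp (- real n) * Ptr y n = (\<Sum>t\<in>Omega n. fps_exp (4 * real (S2 t) - real n))"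
    unfolding Ptr_def sum_distrib_left y_def
  proof (intro sum.cong refl)
    fix t
    show "fps_exp (- real n) * fps_exp 4 ^ S2 t = fps_exp (4 * real (S2 t) - real n)"
      by (simp add: fps_exp_power_mult fps_exp_add_mult[symmetric] algebra_simps)
  qed
  have "fps_exp (- real n) * (2 * Ptr y n) =
        - (\<Sum>j=0..n. fps_exp (- real n) * (fps_const (bb j) * (-\<beta>) ^ j * (fps_const (bb (n - j)) * (-\<alpha>) ^ (n - j))))"
    unfolding m2 by (simp add: sum_distrib_left)
  also have "\<dots> = - (\<Sum>j=0..n. fps_const (bb j * bb (n - j) * 4 ^ j * (-4) ^ (n - j)) *
          (fps_X ^ j * (uu ^ j * (1 + fps_X ^ 2 * hh) ^ (n - j))))"
    unfolding \<alpha>_def \<beta>_def by (intro arg_cong[where f=uminus] sum.cong refl term_j) simp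
  finally show ?thesis unfolding lhs[symmetric] by (simp add: mult_ac)
qed

definition Q :: "nat \<Rightarrow> nat \<Rightarrow> nat \<Rightarrow> real" where
  "Q j m r = (uu ^ j * (1 + fps_X ^ 2 * hh) ^ m) $ r"

lemma bb_nz: "bb n \<noteq> 0"
proof -
  have "fact n * bb n = (\<Prod>i = 0..<n. (1/2::real) - of_nat i)"
    unfolding bb_def by (rule gbinomial_mult_fact)
  moreover have "(\<Prod>i = 0..<n. (1/2::real) - of_nat i) \<noteq> 0"
  proof -
    have "(1/2::real) - of_nat i \<noteq> 0" for i
    proof
      assume "(1/2::real) - of_nat i = 0"
      then have "2 * real i = 1" by simp
      then have "2 * i = 1" by linarith
      then show False by presburger
    qed
    then show ?thesis by (simp add: prod_zero_iff)
  qed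
  ultimately show ?thesis by auto
qed

lemma bb0: "bb 0 = 1" by (simp add: bb_def)

lemma coeff_identity:
  assumes n: "n \<ge> 1" and kn: "k \<le> n"
  shows "2 * (\<Sum>t\<in>Omega n. (4 * real (S2 t) - real n) ^ k / fact k) =
    - (\<Sum>j=0..k. bb j * bb (n - j) * 4 ^ j * (-4) ^ (n - j) * Q j (n - j) (k - j))"
proof -
  have "(2 * (\<Sum>t\<in>Omega n. fps_exp (4 * real (S2 t) - real n))) $ k =
     (- (\<Sum>j=0..n. fps_const (bb j * bb (n - j) * 4 ^ j * (-4) ^ (n - j)) *
          (fps_X ^ j * (uu ^ j * (1 + fps_X ^ 2 * hh) ^ (n - j))))) $ k"
    using exp_identity[OF n] by simp
  moreover have "(2 * (\<Sum>t\<in>Omega n. fps_exp (4 * real (S2 t) - real n))) $ k =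
      2 * (\<Sum>t\<in>Omega n. (4 * real (S2 t) - real n) ^ k / fact k)"
    by (simp add: numeral_fps_const fps_sum_nth)
  moreover have "(- (\<Sum>j=0..n. fps_const (bb j * bb (n - j) * 4 ^ j * (-4) ^ (n - j)) *
          (fps_X ^ j * (uu ^ j * (1 + fps_X ^ 2 * hh) ^ (n - j))))) $ k =
      - (\<Sum>j=0..n. if k < j then 0 else bb j * bb (n - j) * 4 ^ j * (-4) ^ (n - j) * Q j (n - j) (k - j))"
    by (simp only: fps_neg_nth fps_sum_nth, intro arg_cong[where f=uminus] sum.cong refl)
       (simp add: fps_X_power_mult_nth Q_def)
  moreover have "(\<Sum>j=0..n. if k < j then 0 else bb j * bb (n - j) * 4 ^ j * (-4) ^ (n - j) * Q j (n - j) (k - j))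
      = (\<Sum>j=0..k. bb j * bb (n - j) * 4 ^ j * (-4) ^ (n - j) * Q j (n - j) (k - j))"
    by (rule sum.mono_neutral_cong_right) (use kn in auto)
  ultimately show ?thesis by simp
qed

lemma card_identity:
  assumes n: "n \<ge> 1"
  shows "2 * real (card (Omega n)) = - (bb n * (-4) ^ n)"
proof -
  have "2 * (\<Sum>t\<in>Omega n. (4 * real (S2 t) - real n) ^ 0 / fact 0) =
    - (\<Sum>j=0..0. bb j * bb (n - j) * 4 ^ j * (-4) ^ (n - j) * Q j (n - j) (0 - j))"
    by (rule coeff_identity[OF n]) simp
  moreover have "Q 0 n 0 = 1" by (simp add: Q_def fps_power_zeroth)
  ultimately show ?thesis by (simp add: bb0)
qed

lemma expect_formula:
  assumes n: "n \<ge> 1" and kn: "k \<le> n"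
  shows "expect n (\<lambda>t. (real (S2 t) - real n / 4) ^ k) =
    fact k / 4 ^ k * (\<Sum>j=0..k. bb j * ((-1) ^ j * bb (n - j) / bb n) * Q j (n - j) (k - j))"
proof -
  have pw: "(4::real) ^ j * (-4) ^ (n - j) = (-1) ^ j * (-4) ^ n" if "j \<le> n" for j
  proof -
    have "(-4::real) ^ n = (-4) ^ j * (-4) ^ (n - j)" using that by (simp add: power_add[symmetric])
    also have "(-4::real) ^ j = (-1) ^ j * 4 ^ j" by (simp add: power_mult_distrib[symmetric])
    finally have "(-4::real) ^ n = (-1) ^ j * (4 ^ j * (-4) ^ (n - j))" by simp
    then have "(-1) ^ j * (-4::real) ^ n = ((-1) ^ j * (-1) ^ j) * (4 ^ j * (-4) ^ (n - j))" by simp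
    also have "(-1::real) ^ j * (-1) ^ j = 1" by (simp add: power_mult_distrib[symmetric])
    finally show ?thesis by simp
  qed
  have nz: "bb n * (-4::real) ^ n \<noteq> 0" using bb_nz by simp
  have sumY: "(\<Sum>t\<in>Omega n. (real (S2 t) - real n / 4) ^ k) =
      fact k / 4 ^ k * (\<Sum>t\<in>Omega n. (4 * real (S2 t) - real n) ^ k / fact k)"
  proof -
    have "(real (S2 t) - real n / 4) ^ k = fact k / 4 ^ k * ((4 * real (S2 t) - real n) ^ k / fact k)" for t
    proof -
      have "real (S2 t) - real n / 4 = (4 * real (S2 t) - real n) / 4" by simp
      then have "(real (S2 t) - real n / 4) ^ k = (4 * real (S2 t) - real n) ^ k / 4 ^ k"
        by (simp only: power_divide)
      then show ?thesis by simp
    qed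
    then show ?thesis by (simp only: sum_distrib_left)
  qed
  have "expect n (\<lambda>t. (real (S2 t) - real n / 4) ^ k) =
      fact k / 4 ^ k * (2 * (\<Sum>t\<in>Omega n. (4 * real (S2 t) - real n) ^ k / fact k)) / (2 * real (card (Omega n)))"
    unfolding expect_def sumY by simp
  also have "\<dots> = fact k / 4 ^ k * (\<Sum>j=0..k. bb j * bb (n - j) * 4 ^ j * (-4) ^ (n - j) * Q j (n - j) (k - j))
      / (bb n * (-4) ^ n)"
    unfolding coeff_identity[OF n kn] card_identity[OF n] by simp
  also have "\<dots> = fact k / 4 ^ k * ((\<Sum>j=0..k. bb j * bb (n - j) * 4 ^ j * (-4) ^ (n - j) * Q j (n - j) (k - j))
      / (bb n * (-4) ^ n))" by simp
  also have "(\<Sum>j=0..k. bb j * bb (n - j) * 4 ^ j * (-4) ^ (n - j) * Q j (n - j) (k - j)) / (bb n * (-4) ^ n)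
      = (\<Sum>j=0..k. bb j * ((-1) ^ j * bb (n - j) / bb n) * Q j (n - j) (k - j))"
    unfolding sum_divide_distrib
  proof (intro sum.cong refl)
    fix j assume "j \<in> {0..k}"
    then have "j \<le> n" using kn by simp
    then have "bb j * bb (n - j) * 4 ^ j * (-4) ^ (n - j) * Q j (n - j) (k - j) =
        bb j * bb (n - j) * ((-1) ^ j * (-4) ^ n) * Q j (n - j) (k - j)"
      using pw[of j] by (simp add: mult_ac)
    then show "bb j * bb (n - j) * 4 ^ j * (-4) ^ (n - j) * Q j (n - j) (k - j) / (bb n * (-4) ^ n) =
        bb j * ((-1) ^ j * bb (n - j) / bb n) * Q j (n - j) (k - j)"
      using nz by (simp add: field_simps)
  qed
  finally show ?thesis .
qed



definition w :: "nat \<Rightarrow> nat \<Rightarrow> nat \<Rightarrow> real" where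
  "w j i r = (if 2 * i \<le> r then (uu ^ j * hh ^ i) $ (r - 2 * i) else 0)"

lemma Q_expand: "Q j m r = (\<Sum>i=0..r. real (m choose i) * w j i r)"
proof -
  have "(1 + fps_X ^ 2 * hh) ^ m = (\<Sum>i\<le>m. of_nat (m choose i) * (fps_X ^ 2 * hh) ^ i * 1 ^ (m - i))"
    using binomial_ring[of "fps_X ^ 2 * hh" 1 m] by (simp add: add.commute)
  then have "uu ^ j * (1 + fps_X ^ 2 * hh) ^ m =
      (\<Sum>i\<le>m. fps_const (real (m choose i)) * (fps_X ^ (2 * i) * (uu ^ j * hh ^ i)))"
    by (simp add: sum_distrib_left power_mult_distrib power_mult[symmetric] fps_of_nat mult_ac)
  then have "Q j m r = (\<Sum>i\<le>m. real (m choose i) * w j i r)"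
    unfolding Q_def w_def by (simp add: fps_sum_nth fps_X_power_mult_nth) (intro sum.cong refl; auto)
  also have "\<dots> = (\<Sum>i\<le>m + r. real (m choose i) * w j i r)"
    by (rule sum.mono_neutral_left) auto
  also have "\<dots> = (\<Sum>i=0..r. real (m choose i) * w j i r)"
    by (rule sum.mono_neutral_right) (auto simp: w_def)
  finally show ?thesis .
qed

lemma lim1: "((\<lambda>n. (real n - real j - real l) / real n) \<longlongrightarrow> 1) at_top"
  by real_asymp

lemma lim2: "((\<lambda>n::nat. (real n - real j) / (real n - real j - 3/2)) \<longlongrightarrow> 1) at_top"
  by real_asymp

lemma bb_rec: "real (Suc m) * bb (Suc m) = (1/2 - real m) * bb m"
  using gbinomial_mult_1[of "1/2::real" m] unfolding bb_def by (simp add: algebra_simps)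

definition rho :: "nat \<Rightarrow> nat \<Rightarrow> real" where "rho j n = (-1) ^ j * bb (n - j) / bb n"

lemma rho_lim: "((\<lambda>n. rho j n) \<longlongrightarrow> 1) at_top"
proof (induction j)
  case 0
  have "rho 0 n = 1" for n using bb_nz[of n] by (simp add: rho_def)
  then show ?case by simp
next
  case (Suc j)
  have ev: "eventually (\<lambda>n. rho j n * ((real n - real j) / (real n - real j - 3/2)) = rho (Suc j) n) at_top"
    using eventually_ge_at_top[of "Suc (Suc j)"]
  proof eventually_elim
    case (elim n)
    define m where "m = n - Suc j"
    have nj: "n - j = Suc m" using elim by (simp add: m_def)
    have rm: "real m = real n - real j - 1" using elim by (simp add: m_def of_nat_diff)
    have r: "real (Suc m) * bb (Suc m) = (1/2 - real m) * bb m" by (rule bb_rec)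
    have ne: "real n - real j - 3/2 \<noteq> 0"
    proof
      assume "real n - real j - 3/2 = 0"
      then have "2 * real n = 2 * real j + 3" by simp
      then have "2 * n = 2 * j + 3" by linarith
      then show False by presburger
    qed
    have bmz: "bb (Suc m) \<noteq> 0" by (rule bb_nz)
    have r2: "(real n - real j) * bb (Suc m) = - (real n - real j - 3/2) * bb m"
      using r unfolding of_nat_Suc rm by (simp add: algebra_simps)
    have bm: "bb m = - ((real n - real j) / (real n - real j - 3/2)) * bb (Suc m)"
      using r2 ne by (simp add: field_simps)
    have mj: "n - Suc j = m" by (simp add: m_def)
    have a1: "rho (Suc j) n = (-1) ^ j * bb (Suc m) / bb n * ((real n - real j) / (real n - real j - 3/2))"
      unfolding rho_def mj bm by (simp add: mult_ac)
    have a2: "rho j n = (-1) ^ j * bb (Suc m) / bb n" unfolding rho_def nj ..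
    show ?case unfolding a1 a2 ..
  qed
  have "((\<lambda>n. rho j n * ((real n - real j) / (real n - real j - 3/2))) \<longlongrightarrow> 1 * 1) at_top"
    by (intro tendsto_mult Suc.IH) real_asymp
  then show ?case using Lim_transform_eventually[OF _ ev] by simp
qed

lemma binom_lim:
  assumes "i \<le> d"
  shows "((\<lambda>n. real ((n - j) choose i) / real n ^ d) \<longlongrightarrow> (if i = d then 1 / fact d else 0)) at_top"
proof -
  have ev: "eventually (\<lambda>n. ((\<Prod>l\<in>{0..<i}. (real n - real j - real l) / real n) / fact i) * (real n ^ i / real n ^ d)
      = real ((n - j) choose i) / real n ^ d) at_top"
    using eventually_ge_at_top[of "Suc j"]
  proof eventually_elim
    case (elim n)
    then have npos: "real n > 0" by simp
    have "real ((n - j) choose i) = (\<Prod>l\<in>{0..<i}. real (n - j) - real l) / fact i"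
      unfolding binomial_gbinomial gbinomial_mult_fact'[symmetric] by simp
    also have "real (n - j) = real n - real j" using elim by (simp add: of_nat_diff)
    finally have c: "real ((n - j) choose i) = (\<Prod>l\<in>{0..<i}. real n - real j - real l) / fact i" .
    show ?case unfolding c prod_dividef using npos by (simp add: field_simps)
  qed
  have p: "((\<lambda>n. \<Prod>l\<in>{0..<i}. (real n - real j - real l) / real n) \<longlongrightarrow> (\<Prod>l\<in>{0..<i}. 1)) at_top"
    by (intro tendsto_prod lim1)
  have q: "((\<lambda>n. real n ^ i / real n ^ d) \<longlongrightarrow> (if i = d then 1 else 0)) at_top"
  proof (cases "i = d")
    case True
    have "eventually (\<lambda>n. 1 = real n ^ i / real n ^ d) at_top"
      using eventually_ge_at_top[of "1::nat"] by eventually_elim (simp add: True)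
    then have "((\<lambda>n. real n ^ i / real n ^ d) \<longlongrightarrow> 1) at_top"
      by (rule Lim_transform_eventually[OF tendsto_const])
    then show ?thesis using True by simp
  next
    case False
    then have dp: "d - i > 0" using assms by simp
    have "eventually (\<lambda>n. inverse (real n ^ (d - i)) = real n ^ i / real n ^ d) at_top"
      using eventually_ge_at_top[of "1::nat"]
    proof eventually_elim
      case (elim n)
      have "real n ^ d = real n ^ i * real n ^ (d - i)" using assms by (simp add: power_add[symmetric])
      then show ?case using elim by (simp add: field_simps)
    qed
    moreover have "((\<lambda>n. inverse (real n ^ (d - i))) \<longlongrightarrow> 0) at_top"
      by (intro tendsto_inverse_0_at_top filterlim_pow_at_top[OF dp] filterlim_real_sequentially)
    ultimately show ?thesis using False Lim_transform_eventually by simp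
  qed
  have "((\<lambda>n. ((\<Prod>l\<in>{0..<i}. (real n - real j - real l) / real n) / fact i) * (real n ^ i / real n ^ d))
      \<longlongrightarrow> ((\<Prod>l\<in>{0..<i}. 1) / fact i) * (if i = d then 1 else 0)) at_top"
    by (intro tendsto_mult tendsto_divide p q tendsto_const) simp
  then have "((\<lambda>n. real ((n - j) choose i) / real n ^ d) \<longlongrightarrow> ((\<Prod>l\<in>{0..<i}. 1) / fact i) * (if i = d then 1 else 0)) at_top"
    by (rule Lim_transform_eventually[OF _ ev])
  then show ?thesis by (cases "i = d") simp_all
qed

lemma term_lim:
  assumes "j \<le> k"
  shows "((\<lambda>n. real ((n - j) choose i) / real n ^ (k div 2) * w j i (k - j)) \<longlongrightarrow>
      (if i = k div 2 then 1 / fact (k div 2) else 0) * w j i (k - j)) at_top"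
proof (cases "2 * i \<le> k - j")
  case True
  then have "i \<le> k div 2" by linarith
  then show ?thesis by (intro tendsto_mult binom_lim tendsto_const)
next
  case False
  then show ?thesis by (simp add: w_def)
qed

lemma hh0: "hh $ 0 = 1/2" by (simp add: hh_def)
lemma hh1: "hh $ Suc 0 = 0" by (simp add: hh_def)
lemma uu0: "uu $ 0 = 1" by (simp add: uu_def)
lemma hh_pow1: "(hh ^ d) $ Suc 0 = 0"
  by (induction d) (simp_all add: fps_mult_nth_1 hh1)
lemma bb1: "bb (Suc 0) = 1/2" by (simp add: bb_def)

lemma limit_value:
  fixes k :: nat
  defines "d \<equiv> k div 2"
  shows "fact k / 4 ^ k * (\<Sum>j=0..k. bb j * 1 * (\<Sum>i=0..k - j. (if i = d then 1 / fact d else 0) * w j i (k - j)))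
    = fact k / (2 ^ ((k + 1) div 2) * fact d * 4 ^ k)"
proof -
  define g where "g j = bb j * (if 2 * d \<le> k - j then (uu ^ j * hh ^ d) $ (k - j - 2 * d) else 0) / fact d" for j
  have inner: "bb j * 1 * (\<Sum>i=0..k - j. (if i = d then 1 / fact d else 0) * w j i (k - j)) = g j" for j
  proof -
    have "(\<Sum>i=0..k - j. (if i = d then 1 / fact d else 0) * w j i (k - j)) =
          (\<Sum>i=0..k - j. if i = d then w j d (k - j) / fact d else 0)"
      by (intro sum.cong refl) auto
    also have "\<dots> = (if d \<in> {0..k - j} then w j d (k - j) / fact d else 0)"
      by (simp add: sum.delta)
    also have "\<dots> = (if 2 * d \<le> k - j then (uu ^ j * hh ^ d) $ (k - j - 2 * d) else 0) / fact d"
      by (auto simp: w_def)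
    finally show ?thesis by (simp add: g_def)
  qed
  have "(\<Sum>j=0..k. g j) = (\<Sum>j=0..k - 2 * d. g j)"
    by (rule sum.mono_neutral_right) (auto simp: g_def)
  also have "\<dots> = (if even k then (1/2) ^ d / fact d else (1/2) ^ Suc d / fact d)"
  proof (cases "even k")
    case True
    then have "k - 2 * d = 0" by (simp add: d_def)
    moreover have "2 * d = k" using True by (simp add: d_def)
    ultimately show ?thesis using True by (simp add: g_def bb0 fps_power_zeroth hh0)
  next
    case False
    then have "k - 2 * d = Suc 0" unfolding d_def by presburger
    moreover have "k = Suc (2 * d)" using False unfolding d_def by presburger
    ultimately show ?thesis using False
      by (simp add: g_def bb0 bb1 fps_power_zeroth hh0 hh_pow1 uu0)
  qed
  finally have S: "(\<Sum>j=0..k. g j) = (if even k then (1/2) ^ d / fact d else (1/2) ^ Suc d / fact d)" .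
  show ?thesis unfolding inner S
  proof (cases "even k")
    case True
    then have "(k + 1) div 2 = d" by (simp add: d_def)
    then show "fact k / (4::real) ^ k * (if even k then (1/2) ^ d / fact d else (1/2) ^ Suc d / fact d) =
        fact k / (2 ^ ((k + 1) div 2) * fact d * 4 ^ k)" using True by (simp add: power_one_over field_simps)
  next
    case False
    then have "(k + 1) div 2 = Suc d" unfolding d_def by presburger
    then show "fact k / (4::real) ^ k * (if even k then (1/2) ^ d / fact d else (1/2) ^ Suc d / fact d) =
        fact k / (2 ^ ((k + 1) div 2) * fact d * 4 ^ k)" using False by (simp add: power_one_over field_simps)
  qed
qed

theorem lemma3:
  fixes k :: nat
  shows "(\<lambda>n. expect n (\<lambda>t. (real (S2 t) - real n / 4) ^ k))
     \<sim>[at_top] (\<lambda>n. fact k / (2 ^ ((k + 1) div 2) * fact (k div 2) * 4 ^ k)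
                   * real n ^ (k div 2))"
proof -
  define d where "d = k div 2"
  define L where "L = fact k / 4 ^ k * (\<Sum>j=0..k. bb j * 1 * (\<Sum>i=0..k - j. (if i = d then 1 / fact d else 0) * w j i (k - j)))"
  have ev: "eventually (\<lambda>n. fact k / 4 ^ k * (\<Sum>j=0..k. bb j * rho j n *
       (\<Sum>i=0..k - j. real ((n - j) choose i) / real n ^ d * w j i (k - j)))
     = expect n (\<lambda>t. (real (S2 t) - real n / 4) ^ k) / real n ^ d) at_top"
    using eventually_ge_at_top[of "Suc k"]
  proof eventually_elim
    case (elim n)
    then have n1: "n \<ge> 1" and kn: "k \<le> n" by auto
    show ?case unfolding expect_formula[OF n1 kn] Q_expand rho_def
      by (simp add: sum_divide_distrib sum_distrib_left sum_distrib_right mult_ac)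
  qed
  have lim: "((\<lambda>n. fact k / 4 ^ k * (\<Sum>j=0..k. bb j * rho j n *
       (\<Sum>i=0..k - j. real ((n - j) choose i) / real n ^ d * w j i (k - j)))) \<longlongrightarrow> L) at_top"
    unfolding L_def d_def
    by (intro tendsto_mult tendsto_const tendsto_sum rho_lim term_lim) simp
  have lim2: "((\<lambda>n. expect n (\<lambda>t. (real (S2 t) - real n / 4) ^ k) / real n ^ d) \<longlongrightarrow> L) at_top"
    by (rule Lim_transform_eventually[OF lim ev])
  have LK: "L = fact k / (2 ^ ((k + 1) div 2) * fact (k div 2) * 4 ^ k)"
    unfolding L_def d_def by (rule limit_value)
  have nz: "fact k / (2 ^ ((k + 1) div 2) * fact (k div 2) * 4 ^ k) \<noteq> (0::real)" by simp
  show ?thesis using asymp_equivI'_const[OF lim2[unfolded LK] nz] unfolding d_def .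
qed


end
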